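(* Let $\mathcal{H}$ be an $n$-dimensional (real or complex) Hilbert space, let $F=\{f_i\}_{i=1}^N$ be a tight frame for $\mathcal{H}$, and let $\{q_i\}_{i=1}^N$ be the weight number sequence associated with a probability sequence $\{p_i\}_{i=1}^N$. Then the canonical dual $S_F^{-1}F$ is a 1-erasure probabilistic spectrally optimal dual (PSOD) of $F$ if and only if $S_F^{-1}F\in\Delta_F^{(1)}$.
   Context: A finite sequence $F=\{f_i\}_{i=1}^N$ in $\mathcal{H}$ is a frame if there are $A,B>0$ with $A\|f\|^2\le\sum_{i=1}^N|\langle f,f_i\rangle|^2\le B\|f\|^2$ for all $f$; it is tight if one can take $A=B$. The frame operator is $S_Ff=\sum_{i=1}^N\langle f,f_i\rangle f_i$ and the canonical dual is $S_F^{-1}F=\{S_F^{-1}f_i\}_{i=1}^N$. A frame $G=\{g_i\}_{i=1}^N$ is a dual of $F$ if $f=\sum_i\langle f,f_i\rangle g_i=\sum_i\langle f,g_i\rangle f_i$ for all $f$. A probability sequence is $\{p_i\}_{i=1}^N$ with $0\le p_i\le1$, $\sum p_i=1$; weight numbers $q_i=\frac{\sum_{j} p_j}{\sum_{j} p_j-p_i}\cdot\frac{N-1}{n}$. For $\Lambda\subseteq\{1,\dots,N\}$ the error operator is $E_{\Lambda,(F,G)}f=\sum_{i\in\Lambda}q_i\langle f,f_i\rangle g_i$. Set $r_P^{(1)}(F,G)=\max_{|\Lambda|=1}\rho(E_{\Lambda,(F,G)})$ ($\rho$ = spectral radius) and $\mathcal{A}_P^{(1)}(F,G)=\max_{|\Lambda|=1}\frac{\|E_{\Lambda,(F,G)}\|+\rho(E_{\Lambda,(F,G)})}{2}$.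 A dual $G$ of $F$ is a 1-erasure PSOD of $F$ if $r_P^{(1)}(F,G)=\min\{r_P^{(1)}(F,G'):G'\text{ a dual of }F\}$. $\Delta_F^{(1)}$ is the set of duals $G$ of $F$ minimizing $\mathcal{A}_P^{(1)}(F,G)$ over all duals of $F$ (1-erasure PASOD-frames). *)

theory Defs
  imports "Jordan_Normal_Form.Spectral_Radius" "Jordan_Normal_Form.Gauss_Jordan_Elimination"
begin

text \<open>The n-dimensional Hilbert space H is modelled as K^n inside complex n-vectors,
  where the scalar field K is either the reals (embedded in the complex numbers)
  or all complex numbers. Sequences are indexed by 0..N-1.\<close>

definition in_space :: "complex set \<Rightarrow> nat \<Rightarrow> complex vec \<Rightarrow> bool" where
  "in_space K n v \<longleftrightarrow> v \<in> carrier_vec n \<and> (\<forall>k < n. v $ k \<in> K)"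

definition vnorm :: "complex vec \<Rightarrow> real" where
  "vnorm v = sqrt (\<Sum>k<dim_vec v. (cmod (v $ k))^2)"

text \<open>inner product  <f, g> = sum_k f_k * conj(g_k)\<close>
definition ip :: "complex vec \<Rightarrow> complex vec \<Rightarrow> complex" where
  "ip f g = f \<bullet>c g"

definition is_frame :: "complex set \<Rightarrow> nat \<Rightarrow> nat \<Rightarrow> (nat \<Rightarrow> complex vec) \<Rightarrow> bool" where
  "is_frame K n N F \<longleftrightarrow> (\<forall>i<N. in_space K n (F i)) \<and>
     (\<exists>A B. A > 0 \<and> B > 0 \<and> (\<forall>f. in_space K n f \<longrightarrow>
        A * (vnorm f)^2 \<le> (\<Sum>i<N. (cmod (ip f (F i)))^2) \<and>
        (\<Sum>i<N. (cmod (ip f (F i)))^2) \<le> B * (vnorm f)^2))"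

definition is_tight_frame :: "complex set \<Rightarrow> nat \<Rightarrow> nat \<Rightarrow> (nat \<Rightarrow> complex vec) \<Rightarrow> bool" where
  "is_tight_frame K n N F \<longleftrightarrow> (\<forall>i<N. in_space K n (F i)) \<and>
     (\<exists>A. A > 0 \<and> (\<forall>f. in_space K n f \<longrightarrow>
        (\<Sum>i<N. (cmod (ip f (F i)))^2) = A * (vnorm f)^2))"

text \<open>rank-one operator  f \<mapsto> <f, x> y  as a matrix\<close>
definition rank_one :: "complex vec \<Rightarrow> complex vec \<Rightarrow> complex mat" where
  "rank_one y x = mat (dim_vec y) (dim_vec x) (\<lambda>(a, b). y $ a * cnj (x $ b))"

definition frame_op :: "nat \<Rightarrow> nat \<Rightarrow> (nat \<Rightarrow> complex vec) \<Rightarrow> complex mat" where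
  "frame_op n N F = fold (\<lambda>i acc. rank_one (F i) (F i) + acc) [0..<N] (0\<^sub>m n n)"

definition canonical_dual :: "nat \<Rightarrow> nat \<Rightarrow> (nat \<Rightarrow> complex vec) \<Rightarrow> (nat \<Rightarrow> complex vec)" where
  "canonical_dual n N F = (\<lambda>i. the (mat_inverse (frame_op n N F)) *\<^sub>v F i)"

definition sum_vec :: "nat \<Rightarrow> nat \<Rightarrow> (nat \<Rightarrow> complex vec) \<Rightarrow> complex vec" where
  "sum_vec n N v = fold (\<lambda>i acc. v i + acc) [0..<N] (0\<^sub>v n)"

definition is_dual :: "complex set \<Rightarrow> nat \<Rightarrow> nat \<Rightarrow> (nat \<Rightarrow> complex vec) \<Rightarrow> (nat \<Rightarrow> complex vec) \<Rightarrow> bool" where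
  "is_dual K n N F G \<longleftrightarrow> is_frame K n N G \<and>
     (\<forall>f. in_space K n f \<longrightarrow>
        f = sum_vec n N (\<lambda>i. ip f (F i) \<cdot>\<^sub>v G i) \<and>
        f = sum_vec n N (\<lambda>i. ip f (G i) \<cdot>\<^sub>v F i))"

definition prob_seq :: "nat \<Rightarrow> (nat \<Rightarrow> real) \<Rightarrow> bool" where
  "prob_seq N p \<longleftrightarrow> (\<forall>i<N. 0 \<le> p i \<and> p i \<le> 1) \<and> (\<Sum>i<N. p i) = 1"

definition weight :: "nat \<Rightarrow> nat \<Rightarrow> (nat \<Rightarrow> real) \<Rightarrow> nat \<Rightarrow> real" where
  "weight n N p i = (\<Sum>j<N. p j) / ((\<Sum>j<N. p j) - p i) * ((real N - 1) / real n)"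

text \<open>error operator for the one-element erasure set {i}: f \<mapsto> q_i <f, f_i> g_i\<close>
definition err_op1 :: "nat \<Rightarrow> nat \<Rightarrow> (nat \<Rightarrow> real) \<Rightarrow> (nat \<Rightarrow> complex vec) \<Rightarrow> (nat \<Rightarrow> complex vec) \<Rightarrow> nat \<Rightarrow> complex mat" where
  "err_op1 n N p F G i = complex_of_real (weight n N p i) \<cdot>\<^sub>m rank_one (G i) (F i)"

definition op_norm :: "complex set \<Rightarrow> nat \<Rightarrow> complex mat \<Rightarrow> real" where
  "op_norm K n A = Sup {vnorm (A *\<^sub>v v) | v. in_space K n v \<and> vnorm v \<le> 1}"

definition r1 :: "nat \<Rightarrow> nat \<Rightarrow> (nat \<Rightarrow> real) \<Rightarrow> (nat \<Rightarrow> complex vec) \<Rightarrow> (nat \<Rightarrow> complex vec) \<Rightarrow> real" where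
  "r1 n N p F G = Max ((\<lambda>i. spectral_radius (err_op1 n N p F G i)) ` {..<N})"

definition A1 :: "complex set \<Rightarrow> nat \<Rightarrow> nat \<Rightarrow> (nat \<Rightarrow> real) \<Rightarrow> (nat \<Rightarrow> complex vec) \<Rightarrow> (nat \<Rightarrow> complex vec) \<Rightarrow> real" where
  "A1 K n N p F G = Max ((\<lambda>i. (op_norm K n (err_op1 n N p F G i)
                               + spectral_radius (err_op1 n N p F G i)) / 2) ` {..<N})"

definition is_PSOD1 :: "complex set \<Rightarrow> nat \<Rightarrow> nat \<Rightarrow> (nat \<Rightarrow> real) \<Rightarrow> (nat \<Rightarrow> complex vec) \<Rightarrow> (nat \<Rightarrow> complex vec) \<Rightarrow> bool" where
  "is_PSOD1 K n N p F G \<longleftrightarrow> is_dual K n N F G \<and>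
     (\<forall>G'. is_dual K n N F G' \<longrightarrow> r1 n N p F G \<le> r1 n N p F G')"

definition Delta1 :: "complex set \<Rightarrow> nat \<Rightarrow> nat \<Rightarrow> (nat \<Rightarrow> real) \<Rightarrow> (nat \<Rightarrow> complex vec) \<Rightarrow> (nat \<Rightarrow> complex vec) set" where
  "Delta1 K n N p F = {G. is_dual K n N F G \<and>
     (\<forall>G'. is_dual K n N F G' \<longrightarrow> A1 K n N p F G \<le> A1 K n N p F G')}"

end

theory Submission
  imports Defs
begin


lemma ip_sum: assumes "v \<in> carrier_vec n"
  shows "ip u v = (\<Sum>k<n. u $ k * cnj (v $ k))"
  using assms unfolding ip_def scalar_prod_def by (auto intro!: sum.cong)

lemma vnorm_nonneg: "vnorm v \<ge> 0" unfolding vnorm_def by (intro real_sqrt_ge_zero sum_nonneg) simp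

lemma vnorm_sq: "(vnorm v)^2 = (\<Sum>k<dim_vec v. (cmod (v $ k))^2)"
  unfolding vnorm_def by (simp add: sum_nonneg)

lemma ip_self: assumes "v \<in> carrier_vec n"
  shows "ip v v = complex_of_real ((vnorm v)^2)"
proof -
  have "ip v v = (\<Sum>k<n. v $ k * cnj (v $ k))" using ip_sum[OF assms] .
  also have "\<dots> = (\<Sum>k<n. complex_of_real ((cmod (v $ k))^2))"
    by (intro sum.cong refl, simp only: complex_norm_square)
  also have "\<dots> = complex_of_real ((vnorm v)^2)" using assms by (simp add: vnorm_sq)
  finally show ?thesis .
qed

lemma ip_cnj: assumes "u \<in> carrier_vec n" "v \<in> carrier_vec n"
  shows "ip v u = cnj (ip u v)"
  using assms by (simp add: ip_sum[of _ n] mult.commute)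

lemma cs_real:
  fixes a b :: "'i \<Rightarrow> real"
  shows "(\<Sum>i\<in>I. a i * b i)^2 \<le> (\<Sum>i\<in>I. (a i)^2) * (\<Sum>i\<in>I. (b i)^2)"
proof (cases "(\<Sum>i\<in>I. (b i)^2) > 0")
  case False
  have z: "(\<Sum>i\<in>I. (b i)^2) = 0" using False by (simp add: antisym sum_nonneg not_less)
  show ?thesis
  proof (cases "finite I")
    case True
    hence "\<forall>i\<in>I. (b i)^2 = 0" using z by (simp add: sum_nonneg_eq_0_iff)
    thus ?thesis by simp
  next
    case False thus ?thesis by simp
  qed
next
  case True
  define r where "r = (\<Sum>i\<in>I. a i * b i) / (\<Sum>i\<in>I. (b i)^2)"
  have "0 \<le> (\<Sum>i\<in>I. (a i - r * b i)^2)"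
    by (simp add: sum_nonneg)
  also have "\<dots> = (\<Sum>i\<in>I. (a i)^2 - 2 * r * (a i * b i) + r^2 * (b i)^2)"
    by (intro sum.cong refl) (simp add: power2_eq_square field_simps)
  also have "\<dots> = (\<Sum>i\<in>I. (a i)^2) - 2 * r * (\<Sum>i\<in>I. a i * b i) + r^2 * (\<Sum>i\<in>I. (b i)^2)"
    by (simp add: sum.distrib sum_subtractf sum_distrib_left)
  also have "\<dots> = (\<Sum>i\<in>I. (a i)^2) - ((\<Sum>i\<in>I. a i * b i))^2 / (\<Sum>i\<in>I. (b i)^2)"
    by (simp add: r_def power2_eq_square)
  finally show ?thesis
    using True by (simp add: divide_simps)
qed

lemma cs_sqrt:
  fixes a b :: "'i \<Rightarrow> real"
  assumes "\<And>i. i \<in> I \<Longrightarrow> a i \<ge> 0" "\<And>i. i \<in> I \<Longrightarrow> b i \<ge> 0"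
  shows "(\<Sum>i\<in>I. a i * b i) \<le> sqrt (\<Sum>i\<in>I. (a i)^2) * sqrt (\<Sum>i\<in>I. (b i)^2)"
proof -
  have "(\<Sum>i\<in>I. a i * b i) = sqrt ((\<Sum>i\<in>I. a i * b i)^2)"
    using assms by (simp add: sum_nonneg)
  also have "\<dots> \<le> sqrt ((\<Sum>i\<in>I. (a i)^2) * (\<Sum>i\<in>I. (b i)^2))"
    using cs_real real_sqrt_le_mono by blast
  finally show ?thesis by (simp add: real_sqrt_mult)
qed

lemma cs_ip: assumes "u \<in> carrier_vec n" "v \<in> carrier_vec n"
  shows "cmod (ip u v) \<le> vnorm u * vnorm v"
proof -
  have "cmod (ip u v) \<le> (\<Sum>k<n. cmod (u $ k) * cmod (v $ k))"
    unfolding ip_sum[OF assms(2)]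
    by (rule order_trans[OF norm_sum]) (simp add: norm_mult)
  also have "\<dots> \<le> sqrt (\<Sum>k<n. (cmod (u $ k))^2) * sqrt (\<Sum>k<n. (cmod (v $ k))^2)"
    by (rule cs_sqrt) auto
  also have "\<dots> = vnorm u * vnorm v"
    using carrier_vecD[OF assms(1)] carrier_vecD[OF assms(2)] unfolding vnorm_def by simp
  finally show ?thesis .
qed

lemma vnorm_smult: "vnorm (a \<cdot>\<^sub>v v) = cmod a * vnorm v"
proof -
  have "vnorm (a \<cdot>\<^sub>v v) = sqrt ((cmod a)^2 * (\<Sum>k<dim_vec v. (cmod (v $ k))^2))"
    unfolding vnorm_def by (simp add: norm_mult power_mult_distrib sum_distrib_left)
  also have "\<dots> = cmod a * vnorm v" unfolding vnorm_def by (simp add: real_sqrt_mult)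
  finally show ?thesis .
qed

lemma ip_smult_left: assumes "v \<in> carrier_vec n" "u \<in> carrier_vec n"
  shows "ip (a \<cdot>\<^sub>v u) v = a * ip u v"
  using assms by (simp add: ip_sum[OF assms(1)] sum_distrib_left mult.assoc)

lemma ip_smult_right: assumes "v \<in> carrier_vec n"
  shows "ip u (a \<cdot>\<^sub>v v) = cnj a * ip u v"
  using assms by (simp add: ip_sum[of _ n] sum_distrib_left ac_simps)

lemma ip_add_left: assumes "v \<in> carrier_vec n" "u \<in> carrier_vec n" "w \<in> carrier_vec n"
  shows "ip (u + w) v = ip u v + ip w v"
  using assms by (simp add: ip_sum[of _ n] distrib_right sum.distrib)

lemma ip_add_right: assumes "v \<in> carrier_vec n" "u \<in> carrier_vec n" "w \<in> carrier_vec n"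
  shows "ip u (v + w) = ip u v + ip u w"
  using assms by (simp add: ip_sum[of _ n] distrib_left sum.distrib)

lemma vnorm_zero_iff: assumes "v \<in> carrier_vec n"
  shows "vnorm v = 0 \<longleftrightarrow> v = 0\<^sub>v n"
proof
  assume "vnorm v = 0"
  hence "(\<Sum>k<n. (cmod (v $ k))^2) = 0" using assms vnorm_sq[of v] by simp
  hence "\<forall>k\<in>{..<n}. (cmod (v $ k))^2 = 0" by (subst (asm) sum_nonneg_eq_0_iff) auto
  thus "v = 0\<^sub>v n" using assms by (intro eq_vecI) auto
next
  assume "v = 0\<^sub>v n" thus "vnorm v = 0" by (simp add: vnorm_def)
qed


lemma rank_one_carrier: assumes "x \<in> carrier_vec n" "y \<in> carrier_vec n"
  shows "rank_one y x \<in> carrier_mat n n"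
  using assms unfolding rank_one_def by auto

lemma rank_one_mult: assumes "x \<in> carrier_vec n" "y \<in> carrier_vec n" "v \<in> carrier_vec n"
  shows "(c \<cdot>\<^sub>m rank_one y x) *\<^sub>v v = (c * ip v x) \<cdot>\<^sub>v y"
  using assms
  by (intro eq_vecI) (auto simp: rank_one_def ip_sum[of _ n] scalar_prod_def sum_distrib_left ac_simps intro!: sum.cong)

lemma ip_zero_left: assumes "x \<in> carrier_vec n" shows "ip (0\<^sub>v n) x = 0"
  using assms by (simp add: ip_sum[OF assms])

lemma rho_rank_one: assumes x: "x \<in> carrier_vec n" and y: "y \<in> carrier_vec n" and n: "n > 0"
  shows "spectral_radius (c \<cdot>\<^sub>m rank_one y x) = cmod (c * ip y x)"
proof -
  define B where "B = c \<cdot>\<^sub>m rank_one y x"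
  have B: "B \<in> carrier_mat n n" unfolding B_def using rank_one_carrier[OF x y] by simp
  have Bv: "B *\<^sub>v v = (c * ip v x) \<cdot>\<^sub>v y" if "v \<in> carrier_vec n" for v
    unfolding B_def using rank_one_mult[OF x y that] .
  define l where "l = c * ip y x"
  have spec: "k = 0 \<or> k = l" if "k \<in> spectrum B" for k
  proof (rule ccontr)
    assume nk: "\<not> (k = 0 \<or> k = l)"
    from that obtain v where v: "v \<in> carrier_vec n" "v \<noteq> 0\<^sub>v n" "B *\<^sub>v v = k \<cdot>\<^sub>v v"
      unfolding spectrum_def eigenvalue_def eigenvector_def using B by auto
    have eq: "(c * ip v x) \<cdot>\<^sub>v y = k \<cdot>\<^sub>v v" using v Bv by simp
    have "ip ((c * ip v x) \<cdot>\<^sub>v y) x = ip (k \<cdot>\<^sub>v v) x" using eq by simp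
    hence eq2: "c * ip v x * ip y x = k * ip v x"
      using ip_smult_left[OF x y] ip_smult_left[OF x v(1)] by simp
    show False
    proof (cases "ip v x = 0")
      case True
      hence "k \<cdot>\<^sub>v v = 0\<^sub>v n" using eq y v(1) by (intro eq_vecI) (auto simp: vec_eq_iff)
      hence "v = 0\<^sub>v n" using nk v(1)
      proof (intro eq_vecI)
        fix i assume "i < dim_vec (0\<^sub>v n :: complex vec)"
        hence i: "i < n" by simp
        have "(k \<cdot>\<^sub>v v) $ i = 0" using \<open>k \<cdot>\<^sub>v v = 0\<^sub>v n\<close> i by simp
        hence "k * v $ i = 0" using i v(1) by simp
        thus "v $ i = 0\<^sub>v n $ i" using nk i by simp
      qed (use v(1) in simp)
      thus False using v(2) by simp
    next
      case False
      hence "k = l" using eq2 unfolding l_def by (simp add: mult.commute)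
      thus False using nk by simp
    qed
  qed
  have mem: "l \<in> spectrum B" if "l \<noteq> 0"
  proof -
    have "y \<noteq> 0\<^sub>v n" using that ip_zero_left[OF x] unfolding l_def by auto
    moreover have "B *\<^sub>v y = l \<cdot>\<^sub>v y" using Bv[OF y] unfolding l_def .
    ultimately show ?thesis unfolding spectrum_def eigenvalue_def eigenvector_def using B y by auto
  qed
  have r1: "spectral_radius B \<in> norm ` spectrum B" using spectral_radius_mem_max(1)[OF B n] .
  show ?thesis
  proof (cases "l = 0")
    case True
    then show ?thesis using r1 spec unfolding B_def l_def by auto
  next
    case False
    have "cmod l \<le> spectral_radius B" using spectral_radius_mem_max(2)[OF B n] mem[OF False] by auto
    moreover have "spectral_radius B = 0 \<or> spectral_radius B = cmod l" using r1 by (auto dest!: spec)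
    ultimately show ?thesis using False unfolding B_def l_def by auto
  qed
qed


lemma in_space_carrier: "in_space K n v \<Longrightarrow> v \<in> carrier_vec n"
  unfolding in_space_def by simp

lemma in_space_smult: assumes K: "K = \<real> \<or> K = UNIV" and v: "in_space K n v"
  shows "in_space K n (complex_of_real r \<cdot>\<^sub>v v)"
  using K v unfolding in_space_def by auto

lemma in_space_add: assumes K: "K = \<real> \<or> K = UNIV" and "in_space K n u" "in_space K n v"
  shows "in_space K n (u + v)"
  using assms unfolding in_space_def by auto

lemma in_space_zero: assumes K: "K = \<real> \<or> K = UNIV" shows "in_space K n (0\<^sub>v n)"
  using K unfolding in_space_def by auto

lemma op_norm_le: assumes K: "K = \<real> \<or> K = UNIV" and x: "x \<in> carrier_vec n" and y: "y \<in> carrier_vec n"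
  shows "op_norm K n (c \<cdot>\<^sub>m rank_one y x) \<le> cmod c * vnorm x * vnorm y"
  unfolding op_norm_def
proof (rule cSup_least)
  show "{vnorm ((c \<cdot>\<^sub>m rank_one y x) *\<^sub>v v) |v. in_space K n v \<and> vnorm v \<le> 1} \<noteq> {}"
    using in_space_zero[OF K, of n] by (auto simp: vnorm_def)
next
  fix s assume "s \<in> {vnorm ((c \<cdot>\<^sub>m rank_one y x) *\<^sub>v v) |v. in_space K n v \<and> vnorm v \<le> 1}"
  then obtain v where v: "in_space K n v" "vnorm v \<le> 1" and s: "s = vnorm ((c \<cdot>\<^sub>m rank_one y x) *\<^sub>v v)"
    by auto
  have vc: "v \<in> carrier_vec n" using v(1) by (rule in_space_carrier)
  have "s = cmod c * cmod (ip v x) * vnorm y"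
    using s rank_one_mult[OF x y vc] by (simp add: vnorm_smult norm_mult)
  also have "\<dots> \<le> cmod c * (vnorm v * vnorm x) * vnorm y"
    by (intro mult_right_mono mult_left_mono cs_ip[OF vc x]) (auto simp: vnorm_nonneg)
  also have "\<dots> \<le> cmod c * (1 * vnorm x) * vnorm y"
    by (intro mult_right_mono mult_left_mono v(2)) (auto simp: vnorm_nonneg)
  finally show "s \<le> cmod c * vnorm x * vnorm y" by simp
qed

lemma op_norm_ge: assumes K: "K = \<real> \<or> K = UNIV" and x: "x \<in> carrier_vec n" and y: "in_space K n y"
  shows "cmod (c * ip y x) \<le> op_norm K n (c \<cdot>\<^sub>m rank_one y x)"
proof -
  have yc: "y \<in> carrier_vec n" using y by (rule in_space_carrier)
  define S where "S = {vnorm ((c \<cdot>\<^sub>m rank_one y x) *\<^sub>v v) |v. in_space K n v \<and> vnorm v \<le> 1}"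
  have bdd: "bdd_above S"
  proof
    fix s assume "s \<in> S"
    then obtain v where v: "in_space K n v" "vnorm v \<le> 1" and s: "s = vnorm ((c \<cdot>\<^sub>m rank_one y x) *\<^sub>v v)"
      unfolding S_def by auto
    have vc: "v \<in> carrier_vec n" using v(1) by (rule in_space_carrier)
    have "s = cmod c * cmod (ip v x) * vnorm y"
      using s rank_one_mult[OF x yc vc] by (simp add: vnorm_smult norm_mult)
    also have "\<dots> \<le> cmod c * (vnorm v * vnorm x) * vnorm y"
      by (intro mult_right_mono mult_left_mono cs_ip[OF vc x]) (auto simp: vnorm_nonneg)
    also have "\<dots> \<le> cmod c * (1 * vnorm x) * vnorm y"
      by (intro mult_right_mono mult_left_mono v(2)) (auto simp: vnorm_nonneg)
    finally show "s \<le> cmod c * vnorm x * vnorm y" by simp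
  qed
  show ?thesis
  proof (cases "y = 0\<^sub>v n")
    case True
    have "vnorm ((c \<cdot>\<^sub>m rank_one y x) *\<^sub>v 0\<^sub>v n) \<in> S"
      unfolding S_def using in_space_zero[OF K, of n] by (auto simp: vnorm_def)
    hence "vnorm ((c \<cdot>\<^sub>m rank_one y x) *\<^sub>v 0\<^sub>v n) \<le> Sup S" using bdd by (rule cSup_upper)
    moreover have "cmod (c * ip y x) = 0" using True ip_zero_left[OF x] by simp
    ultimately show ?thesis unfolding op_norm_def S_def[symmetric] using vnorm_nonneg
      by (metis order.trans)
  next
    case False
    have ny: "vnorm y > 0" using False vnorm_zero_iff[OF yc] vnorm_nonneg[of y] by auto
    define v where "v = complex_of_real (1 / vnorm y) \<cdot>\<^sub>v y"
    have vs: "in_space K n v" unfolding v_def by (rule in_space_smult[OF K y])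
    have vc: "v \<in> carrier_vec n" using vs by (rule in_space_carrier)
    have nv: "vnorm v = 1" unfolding v_def vnorm_smult using ny by (simp add: norm_divide)
    have "vnorm ((c \<cdot>\<^sub>m rank_one y x) *\<^sub>v v) = cmod c * cmod (ip v x) * vnorm y"
      using rank_one_mult[OF x yc vc] by (simp add: vnorm_smult norm_mult)
    also have "ip v x = complex_of_real (1 / vnorm y) * ip y x"
      unfolding v_def by (rule ip_smult_left[OF x yc])
    also have "cmod c * cmod (complex_of_real (1 / vnorm y) * ip y x) * vnorm y = cmod (c * ip y x)"
      using ny by (simp add: norm_mult norm_divide)
    finally have "cmod (c * ip y x) \<in> S" unfolding S_def using vs nv by force
    thus ?thesis unfolding op_norm_def S_def[symmetric] using bdd by (rule cSup_upper)
  qed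
qed



lemma fold_mat_sum: assumes "\<And>i. i < N \<Longrightarrow> M i \<in> carrier_mat n n"
  shows "fold (\<lambda>i acc. M i + acc) [0..<N] (0\<^sub>m n n) = mat n n (\<lambda>p. \<Sum>i<N. M i $$ p)"
  using assms
proof (induction N)
  case 0
  then show ?case by (intro eq_matI) auto
next
  case (Suc N)
  have "fold (\<lambda>i acc. M i + acc) [0..<Suc N] (0\<^sub>m n n) = M N + fold (\<lambda>i acc. M i + acc) [0..<N] (0\<^sub>m n n)"
    by simp
  also have "\<dots> = M N + mat n n (\<lambda>p. \<Sum>i<N. M i $$ p)" using Suc by simp
  also have "\<dots> = mat n n (\<lambda>p. \<Sum>i<Suc N. M i $$ p)"
    using Suc.prems[of N] by (intro eq_matI) (auto simp: add.commute)
  finally show ?case .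
qed

lemma fold_vec_sum: assumes "\<And>i. i < N \<Longrightarrow> v i \<in> carrier_vec n"
  shows "fold (\<lambda>i acc. v i + acc) [0..<N] (0\<^sub>v n) = vec n (\<lambda>a. \<Sum>i<N. v i $ a)"
  using assms
proof (induction N)
  case 0
  then show ?case by (intro eq_vecI) auto
next
  case (Suc N)
  have "fold (\<lambda>i acc. v i + acc) [0..<Suc N] (0\<^sub>v n) = v N + fold (\<lambda>i acc. v i + acc) [0..<N] (0\<^sub>v n)"
    by simp
  also have "\<dots> = v N + vec n (\<lambda>a. \<Sum>i<N. v i $ a)" using Suc by simp
  also have "\<dots> = vec n (\<lambda>a. \<Sum>i<Suc N. v i $ a)"
    using Suc.prems[of N] by (intro eq_vecI) (auto simp: add.commute)
  finally show ?case .
qed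

lemma frame_op_eq: assumes "\<And>i. i < N \<Longrightarrow> F i \<in> carrier_vec n"
  shows "frame_op n N F = mat n n (\<lambda>(a,b). \<Sum>i<N. F i $ a * cnj (F i $ b))"
proof -
  have d: "\<And>i. i < N \<Longrightarrow> dim_vec (F i) = n" using assms by auto
  have "frame_op n N F = mat n n (\<lambda>p. \<Sum>i<N. rank_one (F i) (F i) $$ p)"
    unfolding frame_op_def using assms
    by (intro fold_mat_sum) (auto simp: rank_one_def)
  also have "\<dots> = mat n n (\<lambda>(a,b). \<Sum>i<N. F i $ a * cnj (F i $ b))"
    using assms by (intro eq_matI) (auto simp: rank_one_def d intro!: sum.cong)
  finally show ?thesis .
qed

lemma sum_vec_eq: assumes "\<And>i. i < N \<Longrightarrow> v i \<in> carrier_vec n"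
  shows "sum_vec n N v = vec n (\<lambda>a. \<Sum>i<N. v i $ a)"
  unfolding sum_vec_def using assms by (rule fold_vec_sum)

lemma smult_one_mult: fixes v :: "complex vec" assumes "v \<in> carrier_vec n"
  shows "(c \<cdot>\<^sub>m 1\<^sub>m n) *\<^sub>v v = c \<cdot>\<^sub>v v"
proof (intro eq_vecI)
  fix i assume "i < dim_vec (c \<cdot>\<^sub>v v)"
  hence i: "i < n" using assms by simp
  have "((c \<cdot>\<^sub>m 1\<^sub>m n) *\<^sub>v v) $ i = (\<Sum>ia = 0..<n. c * (if ia = i then 1 else 0) * v $ ia)"
    using assms i by (simp add: scalar_prod_def)
  also have "\<dots> = (\<Sum>k = 0..<n. (if k = i then c * v $ k else 0))"
    by (intro sum.cong) auto
  also have "\<dots> = c * v $ i" using i by simp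
  finally show "((c \<cdot>\<^sub>m 1\<^sub>m n) *\<^sub>v v) $ i = (c \<cdot>\<^sub>v v) $ i" using i assms by simp
qed (use assms in simp)

lemma inverse_scalar: fixes S :: "complex mat" assumes S: "S = a \<cdot>\<^sub>m 1\<^sub>m n" and a: "a \<noteq> 0"
  shows "mat_inverse S = Some ((1/a) \<cdot>\<^sub>m 1\<^sub>m n)"
proof -
  have Sc: "S \<in> carrier_mat n n" using S by simp
  have u: "S \<in> Units (ring_mat TYPE(complex) n ())"
    unfolding Units_def ring_mat_def using S a
    by (auto intro!: bexI[of _ "(1/a) \<cdot>\<^sub>m 1\<^sub>m n"])
  obtain B where B: "mat_inverse S = Some B"
    using mat_inverse(1)[OF Sc, of "()"] u by (cases "mat_inverse S") auto
  from mat_inverse(2)[OF Sc B] have SB: "S * B = 1\<^sub>m n" and Bc: "B \<in> carrier_mat n n" by auto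
  have "B = (1/a) \<cdot>\<^sub>m (S * B)" using S a Bc by (auto simp: mult_smult_assoc_mat)
  thus ?thesis using B SB by simp
qed



lemma quad_expand:
  fixes u w :: "nat \<Rightarrow> complex"
  shows "complex_of_real (\<Sum>i<N. (cmod (\<alpha> * cnj (u i) + \<beta> * cnj (w i)))^2)
    = \<alpha> * cnj \<alpha> * (\<Sum>i<N. u i * cnj (u i)) + \<beta> * cnj \<beta> * (\<Sum>i<N. w i * cnj (w i))
      + \<alpha> * cnj \<beta> * (\<Sum>i<N. w i * cnj (u i)) + cnj \<alpha> * \<beta> * (\<Sum>i<N. u i * cnj (w i))"
proof -
  have "complex_of_real (\<Sum>i<N. (cmod (\<alpha> * cnj (u i) + \<beta> * cnj (w i)))^2)
     = (\<Sum>i<N. (\<alpha> * cnj (u i) + \<beta> * cnj (w i)) * cnj (\<alpha> * cnj (u i) + \<beta> * cnj (w i)))"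
    by (simp only: of_real_sum complex_norm_square)
  also have "\<dots> = (\<Sum>i<N. \<alpha> * cnj \<alpha> * (u i * cnj (u i)) + \<beta> * cnj \<beta> * (w i * cnj (w i))
      + \<alpha> * cnj \<beta> * (w i * cnj (u i)) + cnj \<alpha> * \<beta> * (u i * cnj (w i)))"
    by (intro sum.cong refl) (simp add: algebra_simps)
  also have "\<dots> = \<alpha> * cnj \<alpha> * (\<Sum>i<N. u i * cnj (u i)) + \<beta> * cnj \<beta> * (\<Sum>i<N. w i * cnj (w i))
      + \<alpha> * cnj \<beta> * (\<Sum>i<N. w i * cnj (u i)) + cnj \<alpha> * \<beta> * (\<Sum>i<N. u i * cnj (w i))"
    by (simp add: sum.distrib sum_distrib_left)
  finally show ?thesis .
qed

lemma ip_two: assumes v: "v \<in> carrier_vec n" and j: "j < n" and l: "l < n" and jl: "j \<noteq> l"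
  shows "ip (vec n (\<lambda>k. if k = j then \<alpha> else if k = l then \<beta> else 0)) v = \<alpha> * cnj (v $ j) + \<beta> * cnj (v $ l)"
proof -
  have "ip (vec n (\<lambda>k. if k = j then \<alpha> else if k = l then \<beta> else 0)) v
      = (\<Sum>k<n. (if k = j then \<alpha> * cnj (v $ j) else 0) + (if k = l then \<beta> * cnj (v $ l) else 0))"
    unfolding ip_sum[OF v] using jl by (intro sum.cong refl) auto
  also have "\<dots> = \<alpha> * cnj (v $ j) + \<beta> * cnj (v $ l)" using j l by (simp add: sum.distrib)
  finally show ?thesis .
qed

lemma vnorm_two: assumes j: "j < n" and l: "l < n" and jl: "j \<noteq> l"
  shows "(vnorm (vec n (\<lambda>k. if k = j then \<alpha> else if k = l then \<beta> else (0::complex))))^2 = (cmod \<alpha>)^2 + (cmod \<beta>)^2"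
proof -
  have "(vnorm (vec n (\<lambda>k. if k = j then \<alpha> else if k = l then \<beta> else (0::complex))))^2
     = (\<Sum>k<n. (if k = j then (cmod \<alpha>)^2 else 0) + (if k = l then (cmod \<beta>)^2 else 0))"
    unfolding vnorm_sq using jl by (intro sum.cong refl) auto
  also have "\<dots> = (cmod \<alpha>)^2 + (cmod \<beta>)^2" using j l by (simp add: sum.distrib)
  finally show ?thesis .
qed

lemma ip_one: assumes v: "v \<in> carrier_vec n" and j: "j < n"
  shows "ip (vec n (\<lambda>k. if k = j then 1 else 0)) v = cnj (v $ j)"
proof -
  have "ip (vec n (\<lambda>k. if k = j then 1 else 0)) v = (\<Sum>k<n. (if k = j then cnj (v $ j) else 0))"
    unfolding ip_sum[OF v] by (intro sum.cong refl) auto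
  also have "\<dots> = cnj (v $ j)" using j by simp
  finally show ?thesis .
qed

lemma vnorm_one: assumes j: "j < n"
  shows "(vnorm (vec n (\<lambda>k. if k = j then 1 else (0::complex))))^2 = 1"
proof -
  have "(vnorm (vec n (\<lambda>k. if k = j then 1 else (0::complex))))^2 = (\<Sum>k<n. (if k = j then 1 else 0))"
    unfolding vnorm_sq by (intro sum.cong refl) auto
  also have "\<dots> = 1" using j by simp
  finally show ?thesis .
qed

lemma tight_frame_op:
  assumes K: "K = \<real> \<or> K = UNIV" and sp: "\<And>i. i < N \<Longrightarrow> in_space K n (F i)"
    and tight: "\<And>f. in_space K n f \<Longrightarrow> (\<Sum>i<N. (cmod (ip f (F i)))^2) = A * (vnorm f)^2"
  shows "frame_op n N F = complex_of_real A \<cdot>\<^sub>m 1\<^sub>m n"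
proof -
  have Fc: "\<And>i. i < N \<Longrightarrow> F i \<in> carrier_vec n" using sp in_space_carrier by blast
  define S where "S = (\<lambda>a b. \<Sum>i<N. F i $ a * cnj (F i $ b))"
  have diag: "S j j = complex_of_real A" if j: "j < n" for j
  proof -
    define f where "f = vec n (\<lambda>k. if k = j then 1 else (0::complex))"
    have fs: "in_space K n f" unfolding f_def in_space_def using K by auto
    have "complex_of_real (\<Sum>i<N. (cmod (ip f (F i)))^2) = complex_of_real A"
      using tight[OF fs] vnorm_one[OF j] unfolding f_def by simp
    moreover have "(\<Sum>i<N. (cmod (ip f (F i)))^2) = (\<Sum>i<N. (cmod (1 * cnj (F i $ j) + 0 * cnj (F i $ j)))^2)"
      unfolding f_def using ip_one[OF Fc j] by (intro sum.cong refl) auto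
    ultimately show ?thesis using quad_expand[of 1 "\<lambda>i. F i $ j" 0 "\<lambda>i. F i $ j" N]
      unfolding S_def by simp
  qed
  have pair: "complex_of_real (A * ((cmod \<alpha>)^2 + (cmod \<beta>)^2))
     = \<alpha> * cnj \<alpha> * S j j + \<beta> * cnj \<beta> * S l l + \<alpha> * cnj \<beta> * S l j + cnj \<alpha> * \<beta> * S j l"
    if j: "j < n" and l: "l < n" and jl: "j \<noteq> l" and ab: "\<alpha> \<in> K" "\<beta> \<in> K" for j l \<alpha> \<beta>
  proof -
    define f where "f = vec n (\<lambda>k. if k = j then \<alpha> else if k = l then \<beta> else (0::complex))"
    have fs: "in_space K n f" unfolding f_def in_space_def using K ab by auto
    have "(\<Sum>i<N. (cmod (ip f (F i)))^2) = (\<Sum>i<N. (cmod (\<alpha> * cnj (F i $ j) + \<beta> * cnj (F i $ l)))^2)"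
      unfolding f_def using ip_two[OF Fc j l jl] by (intro sum.cong refl) auto
    hence "complex_of_real (A * ((cmod \<alpha>)^2 + (cmod \<beta>)^2))
       = complex_of_real (\<Sum>i<N. (cmod (\<alpha> * cnj (F i $ j) + \<beta> * cnj (F i $ l)))^2)"
      using tight[OF fs] vnorm_two[OF j l jl] unfolding f_def by simp
    thus ?thesis unfolding quad_expand S_def .
  qed
  have herm: "S l j = cnj (S j l)" for j l unfolding S_def by (simp add: mult.commute)
  have off: "S j l = 0" if j: "j < n" and l: "l < n" and jl: "j \<noteq> l" for j l
  proof -
    have "complex_of_real (A * 2) = complex_of_real A + complex_of_real A + S l j + S j l"
      using pair[OF j l jl, of 1 1] diag[OF j] diag[OF l] K by auto
    hence s1: "S l j + S j l = 0" by simp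
    have s2: "S l j = S j l"
      using K
    proof
      assume KR: "K = \<real>"
      have "S l j = (\<Sum>i<N. F i $ l * F i $ j)"
        unfolding S_def using sp[unfolded in_space_def] KR j by (intro sum.cong refl) (auto simp: Reals_cnj_iff)
      also have "\<dots> = S j l"
        unfolding S_def using sp[unfolded in_space_def] KR l by (intro sum.cong refl) (auto simp: Reals_cnj_iff mult.commute)
      finally show ?thesis .
    next
      assume KU: "K = UNIV"
      have "complex_of_real (A * 2) = complex_of_real A + complex_of_real A - \<i> * S l j + \<i> * S j l"
        using pair[OF j l jl, of 1 \<i>] diag[OF j] diag[OF l] KU by auto
      hence "\<i> * (S j l - S l j) = 0" by (simp add: algebra_simps)
      thus ?thesis by simp
    qed
    show ?thesis using s1 s2 by simp
  qed
  have E: "\<And>a b. a < n \<Longrightarrow> b < n \<Longrightarrow> (\<Sum>i<N. F i $ a * cnj (F i $ b)) = (if a = b then complex_of_real A else 0)"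
    using diag off unfolding S_def by auto
  have FE: "frame_op n N F = mat n n (\<lambda>(a,b). \<Sum>i<N. F i $ a * cnj (F i $ b))"
    by (rule frame_op_eq) (rule Fc)
  show ?thesis
    unfolding FE by (intro eq_matI) (auto simp: E)
qed



lemma canon_eq:
  assumes K: "K = \<real> \<or> K = UNIV" and sp: "\<And>i. i < N \<Longrightarrow> in_space K n (F i)"
    and tight: "\<And>f. in_space K n f \<Longrightarrow> (\<Sum>i<N. (cmod (ip f (F i)))^2) = A * (vnorm f)^2"
    and A: "A > 0" and i: "i < N"
  shows "canonical_dual n N F i = complex_of_real (1/A) \<cdot>\<^sub>v F i"
proof -
  have S: "frame_op n N F = complex_of_real A \<cdot>\<^sub>m 1\<^sub>m n" by (rule tight_frame_op[OF K sp tight])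
  have "mat_inverse (frame_op n N F) = Some ((1 / complex_of_real A) \<cdot>\<^sub>m 1\<^sub>m n)"
    by (rule inverse_scalar[OF S]) (use A in simp)
  thus ?thesis unfolding canonical_dual_def
    using smult_one_mult[OF in_space_carrier[OF sp[OF i]]] by simp
qed

lemma recon_comp: assumes "f = sum_vec n N (\<lambda>i. c i \<cdot>\<^sub>v H i)" "\<And>i. i < N \<Longrightarrow> H i \<in> carrier_vec n" "a < n"
  shows "f $ a = (\<Sum>i<N. c i * H i $ a)"
proof -
  have d: "\<And>i. i < N \<Longrightarrow> dim_vec (H i) = n" using assms(2) by auto
  have "f = vec n (\<lambda>a. \<Sum>i<N. (c i \<cdot>\<^sub>v H i) $ a)" using assms(1) sum_vec_eq[of N "\<lambda>i. c i \<cdot>\<^sub>v H i" n] assms(2) by simp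
  thus ?thesis using assms(2,3) by (auto simp: d intro!: sum.cong)
qed

lemma recon_intro: assumes "f \<in> carrier_vec n" "\<And>i. i < N \<Longrightarrow> H i \<in> carrier_vec n"
   "\<And>a. a < n \<Longrightarrow> f $ a = (\<Sum>i<N. c i * H i $ a)"
  shows "f = sum_vec n N (\<lambda>i. c i \<cdot>\<^sub>v H i)"
proof -
  have d: "\<And>i. i < N \<Longrightarrow> dim_vec (H i) = n" using assms(2) by auto
  have "sum_vec n N (\<lambda>i. c i \<cdot>\<^sub>v H i) = vec n (\<lambda>a. \<Sum>i<N. (c i \<cdot>\<^sub>v H i) $ a)" using sum_vec_eq[of N "\<lambda>i. c i \<cdot>\<^sub>v H i" n] assms(2) by simp
  also have "\<dots> = f" using assms by (intro eq_vecI) (auto simp: d intro!: sum.cong)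
  finally show ?thesis by simp
qed

lemma frame_from_recon:
  assumes K: "K = \<real> \<or> K = UNIV" and sp: "\<And>i. i < N \<Longrightarrow> in_space K n (F i)"
    and tight: "\<And>f. in_space K n f \<Longrightarrow> (\<Sum>i<N. (cmod (ip f (F i)))^2) = A * (vnorm f)^2"
    and A: "A > 0" and Hs: "\<And>i. i < N \<Longrightarrow> in_space K n (H i)"
    and rec: "\<And>f. in_space K n f \<Longrightarrow> f = sum_vec n N (\<lambda>i. ip f (H i) \<cdot>\<^sub>v F i)"
  shows "is_frame K n N H"
proof -
  have Fc: "\<And>i. i < N \<Longrightarrow> F i \<in> carrier_vec n" using sp in_space_carrier by blast
  have Hc: "\<And>i. i < N \<Longrightarrow> H i \<in> carrier_vec n" using Hs in_space_carrier by blast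
  define B where "B = (\<Sum>i<N. vnorm (H i) ^ 2) + 1"
  have Bp: "B > 0" unfolding B_def by (simp add: add_nonneg_pos sum_nonneg)
  have Ap: "1 / A > 0" using A by simp
  have lower: "1 / A * (vnorm f)^2 \<le> (\<Sum>i<N. (cmod (ip f (H i)))^2)" if fs: "in_space K n f" for f
  proof -
    have fc: "f \<in> carrier_vec n" using fs by (rule in_space_carrier)
    define X where "X = (\<Sum>i<N. (cmod (ip f (H i)))^2)"
    have "ip f f = (\<Sum>k<n. (\<Sum>i<N. ip f (H i) * F i $ k) * cnj (f $ k))"
      unfolding ip_sum[OF fc] using recon_comp[OF rec[OF fs] Fc] by (intro sum.cong refl) auto
    also have "\<dots> = (\<Sum>i<N. ip f (H i) * (\<Sum>k<n. F i $ k * cnj (f $ k)))"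
      by (simp add: sum_distrib_left sum_distrib_right mult.assoc sum.swap[of _ "{..<n}"])
    also have "\<dots> = (\<Sum>i<N. ip f (H i) * ip (F i) f)"
      using ip_sum[OF fc] by simp
    finally have ff: "ip f f = (\<Sum>i<N. ip f (H i) * ip (F i) f)" .
    have "(vnorm f)^2 = cmod (ip f f)" unfolding ip_self[OF fc] norm_of_real by simp
    also have "\<dots> \<le> (\<Sum>i<N. cmod (ip f (H i)) * cmod (ip f (F i)))"
      unfolding ff by (rule order_trans[OF norm_sum]) (simp add: norm_mult ip_cnj[OF fc Fc])
    also have "\<dots> \<le> sqrt X * sqrt (\<Sum>i<N. (cmod (ip f (F i)))^2)"
      unfolding X_def by (rule cs_sqrt) auto
    also have "\<dots> = sqrt X * (sqrt A * vnorm f)"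
      using tight[OF fs] A by (simp add: real_sqrt_mult vnorm_nonneg)
    finally have le: "(vnorm f)^2 \<le> sqrt X * sqrt A * vnorm f" by (simp add: mult.assoc)
    have X0: "X \<ge> 0" unfolding X_def by (simp add: sum_nonneg)
    have "(vnorm f)^2 \<le> A * X"
    proof (cases "vnorm f = 0")
      case True thus ?thesis using A X0 by simp
    next
      case False
      hence pos: "vnorm f > 0" using vnorm_nonneg[of f] by simp
      have "vnorm f \<le> sqrt X * sqrt A" using le pos by (simp add: power2_eq_square)
      hence "(vnorm f)^2 \<le> (sqrt X * sqrt A)^2" using pos by (intro power_mono) auto
      thus ?thesis using X0 A by (simp add: power_mult_distrib mult.commute)
    qed
    thus ?thesis unfolding X_def using A by (simp add: field_simps)
  qed
  have upper: "(\<Sum>i<N. (cmod (ip f (H i)))^2) \<le> B * (vnorm f)^2" if fs: "in_space K n f" for f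
  proof -
    have fc: "f \<in> carrier_vec n" using fs by (rule in_space_carrier)
    have "(\<Sum>i<N. (cmod (ip f (H i)))^2) \<le> (\<Sum>i<N. (vnorm f * vnorm (H i))^2)"
      by (intro sum_mono power_mono cs_ip[OF fc Hc]) auto
    also have "\<dots> = (vnorm f)^2 * (\<Sum>i<N. (vnorm (H i))^2)"
      by (simp add: power_mult_distrib sum_distrib_left)
    also have "\<dots> \<le> B * (vnorm f)^2"
      unfolding B_def by (simp add: algebra_simps)
    finally show ?thesis .
  qed
  show ?thesis unfolding is_frame_def using Hs lower upper Ap Bp by blast
qed



lemma dual_comb:
  assumes K: "K = \<real> \<or> K = UNIV" and sp: "\<And>i. i < N \<Longrightarrow> in_space K n (F i)"
    and tight: "\<And>f. in_space K n f \<Longrightarrow> (\<Sum>i<N. (cmod (ip f (F i)))^2) = A * (vnorm f)^2"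
    and A: "A > 0" and dC: "is_dual K n N F C" and dG: "is_dual K n N F G"
  shows "is_dual K n N F (\<lambda>i. complex_of_real (1 - t) \<cdot>\<^sub>v C i + complex_of_real t \<cdot>\<^sub>v G i)"
proof -
  define Gt where "Gt = (\<lambda>i. complex_of_real (1 - t) \<cdot>\<^sub>v C i + complex_of_real t \<cdot>\<^sub>v G i)"
  have Cs: "\<And>i. i < N \<Longrightarrow> in_space K n (C i)" using dC unfolding is_dual_def is_frame_def by auto
  have Gs: "\<And>i. i < N \<Longrightarrow> in_space K n (G i)" using dG unfolding is_dual_def is_frame_def by auto
  have Fc: "\<And>i. i < N \<Longrightarrow> F i \<in> carrier_vec n" using sp in_space_carrier by blast
  have Cc: "\<And>i. i < N \<Longrightarrow> C i \<in> carrier_vec n" using Cs in_space_carrier by blast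
  have Gc: "\<And>i. i < N \<Longrightarrow> G i \<in> carrier_vec n" using Gs in_space_carrier by blast
  have Gts: "\<And>i. i < N \<Longrightarrow> in_space K n (Gt i)" unfolding Gt_def
    by (intro in_space_add[OF K] in_space_smult[OF K] Cs Gs)
  have Gtc: "\<And>i. i < N \<Longrightarrow> Gt i \<in> carrier_vec n" using Gts in_space_carrier by blast
  have rec1: "f = sum_vec n N (\<lambda>i. ip f (F i) \<cdot>\<^sub>v Gt i)" if fs: "in_space K n f" for f
  proof (rule recon_intro[OF in_space_carrier[OF fs] Gtc])
    fix a assume a: "a < n"
    have c1: "f $ a = (\<Sum>i<N. ip f (F i) * C i $ a)"
    proof -
      have "f = sum_vec n N (\<lambda>i. ip f (F i) \<cdot>\<^sub>v C i)" using dC fs unfolding is_dual_def by simp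
      thus ?thesis by (rule recon_comp) (use Cc a in auto)
    qed
    have g1: "f $ a = (\<Sum>i<N. ip f (F i) * G i $ a)"
    proof -
      have "f = sum_vec n N (\<lambda>i. ip f (F i) \<cdot>\<^sub>v G i)" using dG fs unfolding is_dual_def by simp
      thus ?thesis by (rule recon_comp) (use Gc a in auto)
    qed
    have "(\<Sum>i<N. ip f (F i) * Gt i $ a)
        = (\<Sum>i<N. complex_of_real (1 - t) * (ip f (F i) * C i $ a) + complex_of_real t * (ip f (F i) * G i $ a))"
    proof (intro sum.cong refl)
      fix i assume "i \<in> {..<N}"
      hence i: "i < N" by simp
      have "Gt i $ a = complex_of_real (1 - t) * C i $ a + complex_of_real t * G i $ a"
        unfolding Gt_def using carrier_vecD[OF Cc[OF i]] carrier_vecD[OF Gc[OF i]] a by simp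
      show "ip f (F i) * Gt i $ a = complex_of_real (1 - t) * (ip f (F i) * C i $ a) + complex_of_real t * (ip f (F i) * G i $ a)"
        unfolding \<open>Gt i $ a = _\<close> by (simp add: algebra_simps)
    qed
    also have "\<dots> = complex_of_real (1 - t) * (\<Sum>i<N. ip f (F i) * C i $ a) + complex_of_real t * (\<Sum>i<N. ip f (F i) * G i $ a)"
      by (simp add: sum.distrib sum_distrib_left)
    also have "\<dots> = complex_of_real (1 - t) * f $ a + complex_of_real t * f $ a"
      by (simp only: c1[symmetric] g1[symmetric])
    also have "\<dots> = f $ a" by (simp add: algebra_simps)
    finally show "f $ a = (\<Sum>i<N. ip f (F i) * Gt i $ a)" by simp
  qed
  have ipGt: "ip f (Gt i) = complex_of_real (1 - t) * ip f (C i) + complex_of_real t * ip f (G i)"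
    if i: "i < N" and fc: "f \<in> carrier_vec n" for f i
  proof -
    have "ip f (Gt i) = ip f (complex_of_real (1 - t) \<cdot>\<^sub>v C i) + ip f (complex_of_real t \<cdot>\<^sub>v G i)"
      unfolding Gt_def by (rule ip_add_right) (use Cc[OF i] Gc[OF i] fc in auto)
    also have "\<dots> = complex_of_real (1 - t) * ip f (C i) + complex_of_real t * ip f (G i)"
      unfolding ip_smult_right[OF Cc[OF i]] ip_smult_right[OF Gc[OF i]] by simp
    finally show ?thesis .
  qed
  have rec2: "f = sum_vec n N (\<lambda>i. ip f (Gt i) \<cdot>\<^sub>v F i)" if fs: "in_space K n f" for f
  proof (rule recon_intro[OF in_space_carrier[OF fs] Fc])
    fix a assume a: "a < n"
    have c1: "f $ a = (\<Sum>i<N. ip f (C i) * F i $ a)"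
    proof -
      have "f = sum_vec n N (\<lambda>i. ip f (C i) \<cdot>\<^sub>v F i)" using dC fs unfolding is_dual_def by simp
      thus ?thesis by (rule recon_comp) (use Fc a in auto)
    qed
    have g1: "f $ a = (\<Sum>i<N. ip f (G i) * F i $ a)"
    proof -
      have "f = sum_vec n N (\<lambda>i. ip f (G i) \<cdot>\<^sub>v F i)" using dG fs unfolding is_dual_def by simp
      thus ?thesis by (rule recon_comp) (use Fc a in auto)
    qed
    have "(\<Sum>i<N. ip f (Gt i) * F i $ a)
        = (\<Sum>i<N. complex_of_real (1 - t) * (ip f (C i) * F i $ a) + complex_of_real t * (ip f (G i) * F i $ a))"
    proof (intro sum.cong refl)
      fix i assume "i \<in> {..<N}"
      hence i: "i < N" by simp
      show "ip f (Gt i) * F i $ a = complex_of_real (1 - t) * (ip f (C i) * F i $ a) + complex_of_real t * (ip f (G i) * F i $ a)"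
        unfolding ipGt[OF i in_space_carrier[OF fs]] by (simp add: algebra_simps)
    qed
    also have "\<dots> = complex_of_real (1 - t) * (\<Sum>i<N. ip f (C i) * F i $ a) + complex_of_real t * (\<Sum>i<N. ip f (G i) * F i $ a)"
      by (simp add: sum.distrib sum_distrib_left)
    also have "\<dots> = complex_of_real (1 - t) * f $ a + complex_of_real t * f $ a"
      by (simp only: c1[symmetric] g1[symmetric])
    also have "\<dots> = f $ a" by (simp add: algebra_simps)
    finally show "f $ a = (\<Sum>i<N. ip f (Gt i) * F i $ a)" by simp
  qed
  have fr: "is_frame K n N Gt" by (rule frame_from_recon[OF K sp tight A Gts rec2])
  show ?thesis unfolding Gt_def[symmetric] is_dual_def using fr rec1 rec2 by blast
qed



lemma key_real:
  fixes q M a nb P R C t :: real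
  assumes q: "q \<ge> 0" and M: "M > 0" and qa: "q * a \<le> M" and qb: "q * nb < M"
    and a: "a \<ge> 0" and nb: "nb \<ge> 0" and t: "0 < t" "t \<le> 1" and P: "P \<ge> 0"
    and R: "R \<le> (1 - t) * a + t * nb"
    and P2: "P^2 \<le> ((1 - t) * a + t * nb)^2 + t^2 * C"
    and tC: "t * q^2 * C < 4 * M * (M - q * nb)"
  shows "q * (P + R) / 2 < M"
proof -
  define X where "X = (1 - t) * a + t * nb"
  define Y where "Y = q * X"
  have MY: "M - Y \<ge> t * (M - q * nb)"
  proof -
    have "M - Y = (1 - t) * (M - q * a) + t * (M - q * nb)" unfolding Y_def X_def by (simp add: algebra_simps)
    moreover have "(1 - t) * (M - q * a) \<ge> 0" using t qa by simp
    ultimately show ?thesis by simp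
  qed
  have "t * (M - q * nb) > 0" using t qb by simp
  hence YM: "Y < M" using MY by linarith
  have qR: "q * R \<le> Y" unfolding Y_def X_def using R q by (rule mult_left_mono)
  have "(q * P)^2 = q^2 * P^2" by (simp add: power_mult_distrib)
  also have "\<dots> \<le> q^2 * (X^2 + t^2 * C)" using P2 unfolding X_def by (intro mult_left_mono) auto
  also have "\<dots> = Y^2 + t * (t * q^2 * C)" unfolding Y_def by (simp add: algebra_simps power2_eq_square)
  also have "\<dots> < Y^2 + t * (4 * M * (M - q * nb))" using mult_strict_left_mono[OF tC t(1)] by linarith
  also have "\<dots> = Y^2 + 4 * M * (t * (M - q * nb))" by (simp add: algebra_simps)
  also have "\<dots> \<le> Y^2 + 4 * M * (M - Y)" using mult_left_mono[OF MY, of "4 * M"] M by linarith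
  also have "\<dots> = (2 * M - Y)^2" by (simp add: algebra_simps power2_eq_square)
  finally have "(q * P)^2 < (2 * M - Y)^2" .
  hence "q * P < 2 * M - Y" by (rule power2_less_imp_less) (use YM M in linarith)
  moreover have "q * (P + R) = q * P + q * R" by (simp add: distrib_left)
  ultimately show ?thesis using qR by linarith
qed



lemma vnorm_add_sq: assumes u: "u \<in> carrier_vec n" and w: "w \<in> carrier_vec n"
  shows "(vnorm (u + w))^2 = (vnorm u)^2 + 2 * Re (ip u w) + (vnorm w)^2"
proof -
  have uw: "u + w \<in> carrier_vec n" using u w by simp
  have "complex_of_real ((vnorm (u + w))^2) = ip (u + w) (u + w)" using ip_self[OF uw] by simp
  also have "\<dots> = ip u u + ip u w + (ip w u + ip w w)"
    using ip_add_left[OF uw u w] ip_add_right[OF u u w] ip_add_right[OF u w w] by simp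
  also have "\<dots> = complex_of_real ((vnorm u)^2) + ip u w + cnj (ip u w) + complex_of_real ((vnorm w)^2)"
    using ip_self[OF u] ip_self[OF w] ip_cnj[OF u w] by simp
  finally have "complex_of_real ((vnorm (u + w))^2) = complex_of_real ((vnorm u)^2) + ip u w + cnj (ip u w) + complex_of_real ((vnorm w)^2)" .
  hence "Re (complex_of_real ((vnorm (u + w))^2)) = Re (complex_of_real ((vnorm u)^2) + ip u w + cnj (ip u w) + complex_of_real ((vnorm w)^2))"
    by simp
  thus ?thesis by simp
qed

lemma gt_bounds:
  assumes f: "f \<in> carrier_vec n" and g: "g \<in> carrier_vec n" and A: "A > 0" and t: "0 \<le> t" "t \<le> 1"
    and y: "y = complex_of_real (1 - t) \<cdot>\<^sub>v (complex_of_real (1 / A) \<cdot>\<^sub>v f) + complex_of_real t \<cdot>\<^sub>v g"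
  shows "cmod (ip y f) \<le> (1 - t) * ((vnorm f)^2 / A) + t * cmod (ip g f)"
    and "(vnorm f * vnorm y)^2 \<le> ((1 - t) * ((vnorm f)^2 / A) + t * cmod (ip g f))^2 + t^2 * (vnorm f * vnorm g)^2"
proof -
  define a where "a = (vnorm f)^2 / A"
  define b where "b = cmod (ip g f)"
  have a0: "a \<ge> 0" unfolding a_def using A by simp
  have b0: "b \<ge> 0" unfolding b_def by simp
  define u where "u = complex_of_real ((1 - t) / A) \<cdot>\<^sub>v f"
  define w where "w = complex_of_real t \<cdot>\<^sub>v g"
  have uc: "u \<in> carrier_vec n" and wc: "w \<in> carrier_vec n" unfolding u_def w_def using f g by auto
  have yuw: "y = u + w" unfolding y u_def w_def by (simp add: smult_smult_assoc)
  have "ip y f = ip u f + ip w f" unfolding yuw by (rule ip_add_left[OF f uc wc])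
  also have "\<dots> = complex_of_real ((1 - t) / A) * ip f f + complex_of_real t * ip g f"
    unfolding u_def w_def using ip_smult_left[OF f f] ip_smult_left[OF f g] by simp
  also have "\<dots> = complex_of_real ((1 - t) * a) + complex_of_real t * ip g f"
    unfolding ip_self[OF f] a_def by simp
  finally have ipy: "ip y f = complex_of_real ((1 - t) * a) + complex_of_real t * ip g f" .
  have "cmod (ip y f) \<le> cmod (complex_of_real ((1 - t) * a)) + cmod (complex_of_real t * ip g f)"
    unfolding ipy by (rule norm_triangle_ineq)
  also have "\<dots> = (1 - t) * a + t * b"
  proof -
    have "cmod (complex_of_real ((1 - t) * a)) = (1 - t) * a" unfolding norm_of_real using t a0 by simp
    moreover have "cmod (complex_of_real t * ip g f) = t * b" unfolding b_def norm_mult norm_of_real using t by simp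
    ultimately show ?thesis by simp
  qed
  finally show "cmod (ip y f) \<le> (1 - t) * ((vnorm f)^2 / A) + t * cmod (ip g f)" unfolding a_def b_def .
  have ipuw: "ip u w = complex_of_real ((1 - t) / A * t) * ip f g"
    unfolding u_def w_def using ip_smult_left[OF g f] ip_smult_right[OF g] by simp
  have Re_le: "Re (ip u w) \<le> (1 - t) / A * t * b"
  proof -
    have "Re (ip u w) = (1 - t) / A * t * Re (ip f g)" unfolding ipuw by simp
    also have "\<dots> \<le> (1 - t) / A * t * cmod (ip f g)"
      using t A by (intro mult_left_mono complex_Re_le_cmod) auto
    also have "cmod (ip f g) = b" unfolding b_def ip_cnj[OF f g] by simp
    finally show ?thesis .
  qed
  have nu: "(vnorm u)^2 = ((1 - t) / A)^2 * (vnorm f)^2"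
    unfolding u_def vnorm_smult norm_of_real using t A by (simp add: power_mult_distrib power_divide)
  have nw: "(vnorm w)^2 = t^2 * (vnorm g)^2"
    unfolding w_def vnorm_smult norm_of_real using t by (simp add: power_mult_distrib)
  have "(vnorm y)^2 = (vnorm u)^2 + 2 * Re (ip u w) + (vnorm w)^2"
    unfolding yuw by (rule vnorm_add_sq[OF uc wc])
  also have "\<dots> \<le> ((1 - t) / A)^2 * (vnorm f)^2 + 2 * ((1 - t) / A * t * b) + t^2 * (vnorm g)^2"
    unfolding nu nw using Re_le by linarith
  finally have ny: "(vnorm y)^2 \<le> ((1 - t) / A)^2 * (vnorm f)^2 + 2 * ((1 - t) / A * t * b) + t^2 * (vnorm g)^2" .
  have "(vnorm f * vnorm y)^2 = (vnorm f)^2 * (vnorm y)^2" by (simp add: power_mult_distrib)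
  also have "\<dots> \<le> (vnorm f)^2 * (((1 - t) / A)^2 * (vnorm f)^2 + 2 * ((1 - t) / A * t * b) + t^2 * (vnorm g)^2)"
    using ny by (rule mult_left_mono) simp
  also have "\<dots> = ((1 - t) * a)^2 + 2 * ((1 - t) * a) * (t * b) + t^2 * (vnorm f * vnorm g)^2"
    unfolding a_def using A by (simp add: field_simps power2_eq_square)
  also have "\<dots> \<le> ((1 - t) * a)^2 + 2 * ((1 - t) * a) * (t * b) + (t * b)^2 + t^2 * (vnorm f * vnorm g)^2"
    by simp
  also have "\<dots> = ((1 - t) * a + t * b)^2 + t^2 * (vnorm f * vnorm g)^2"
    by (simp add: power2_sum)
  finally show "(vnorm f * vnorm y)^2 \<le> ((1 - t) * ((vnorm f)^2 / A) + t * cmod (ip g f))^2 + t^2 * (vnorm f * vnorm g)^2"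
    unfolding a_def b_def .
qed



lemma weight_nonneg: assumes "prob_seq N p" "i < N" shows "weight n N p i \<ge> 0"
proof -
  have s: "(\<Sum>j<N. p j) = 1" and pi: "p i \<le> 1" using assms unfolding prob_seq_def by auto
  have N: "N \<ge> 1" using assms(2) by simp
  have "(\<Sum>j<N. p j) / ((\<Sum>j<N. p j) - p i) \<ge> 0" unfolding s using pi by simp
  moreover have "(real N - 1) / real n \<ge> 0" using N by simp
  ultimately show ?thesis unfolding weight_def by (rule mult_nonneg_nonneg)
qed

lemma rho_err: assumes "G i \<in> carrier_vec n" "F i \<in> carrier_vec n" "n > 0" "weight n N p i \<ge> 0"
  shows "spectral_radius (err_op1 n N p F G i) = weight n N p i * cmod (ip (G i) (F i))"
  unfolding err_op1_def rho_rank_one[OF assms(2,1,3)] norm_mult norm_of_real using assms(4) by simp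

lemma op_err_ge: assumes K: "K = \<real> \<or> K = UNIV" and "in_space K n (G i)" "F i \<in> carrier_vec n" "weight n N p i \<ge> 0"
  shows "weight n N p i * cmod (ip (G i) (F i)) \<le> op_norm K n (err_op1 n N p F G i)"
  using op_norm_ge[OF K assms(3,2), of "complex_of_real (weight n N p i)"] assms(4)
  unfolding err_op1_def norm_mult norm_of_real by simp

lemma op_err_le: assumes K: "K = \<real> \<or> K = UNIV" and "G i \<in> carrier_vec n" "F i \<in> carrier_vec n" "weight n N p i \<ge> 0"
  shows "op_norm K n (err_op1 n N p F G i) \<le> weight n N p i * vnorm (F i) * vnorm (G i)"
  using op_norm_le[OF K assms(3,2), of "complex_of_real (weight n N p i)"] assms(4)
  unfolding err_op1_def norm_of_real by simp

lemma Max_mono_fun: assumes "finite I" "I \<noteq> {}" "\<And>i. i \<in> I \<Longrightarrow> f i \<le> (g i :: real)"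
  shows "Max (f ` I) \<le> Max (g ` I)"
proof -
  have "Max (f ` I) \<in> f ` I" using assms by (intro Max_in) auto
  then obtain j where j: "j \<in> I" "Max (f ` I) = f j" by auto
  have "g j \<le> Max (g ` I)" using assms j by (intro Max_ge) auto
  thus ?thesis using j assms(3) by fastforce
qed



theorem theorem3p5:
  fixes K :: "complex set" and n N :: nat
    and F :: "nat \<Rightarrow> complex vec" and p :: "nat \<Rightarrow> real"
  assumes "K = \<real> \<or> K = UNIV"
    and "n > 0"
    and "is_tight_frame K n N F"
    and "prob_seq N p"
  shows "is_PSOD1 K n N p F (canonical_dual n N F)
     \<longleftrightarrow> canonical_dual n N F \<in> Delta1 K n N p F"
proof -
  note K = assms(1) and n = assms(2) and pr = assms(4)
  have sp: "\<And>i. i < N \<Longrightarrow> in_space K n (F i)" using assms(3) unfolding is_tight_frame_def by auto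
  obtain A where A: "A > 0" and tight: "\<And>f. in_space K n f \<Longrightarrow> (\<Sum>i<N. (cmod (ip f (F i)))^2) = A * (vnorm f)^2"
    using assms(3) unfolding is_tight_frame_def by auto
  have Fc: "\<And>i. i < N \<Longrightarrow> F i \<in> carrier_vec n" using sp in_space_carrier by blast
  have N0: "N \<noteq> 0"
  proof
    assume "N = 0"
    hence "(\<Sum>i<N. p i) = 0" by simp
    thus False using pr unfolding prob_seq_def by simp
  qed
  have fin: "finite {..<N}" and ne: "{..<N} \<noteq> {}" using N0 by auto
  define q where "q = weight n N p"
  have q0: "\<And>i. i < N \<Longrightarrow> q i \<ge> 0" unfolding q_def using weight_nonneg[OF pr] by auto
  define C where "C = canonical_dual n N F"
  have Ceq: "\<And>i. i < N \<Longrightarrow> C i = complex_of_real (1/A) \<cdot>\<^sub>v F i"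
    unfolding C_def by (rule canon_eq[OF K sp tight A])
  define a where "a = (\<lambda>i. (vnorm (F i))^2 / A)"
  have a0: "\<And>i. a i \<ge> 0" unfolding a_def using A by simp
  have Cs: "\<And>i. i < N \<Longrightarrow> in_space K n (C i)"
  proof -
    fix i assume i: "i < N"
    show "in_space K n (C i)" unfolding Ceq[OF i] by (rule in_space_smult[OF K sp[OF i]])
  qed
  have Cc: "\<And>i. i < N \<Longrightarrow> C i \<in> carrier_vec n" using Cs in_space_carrier by blast
  have ipC: "cmod (ip (C i) (F i)) = a i" if i: "i < N" for i
  proof -
    have "ip (C i) (F i) = complex_of_real (1/A) * ip (F i) (F i)"
      unfolding Ceq[OF i] by (rule ip_smult_left[OF Fc[OF i] Fc[OF i]])
    also have "\<dots> = complex_of_real (a i)" unfolding ip_self[OF Fc[OF i]] a_def by simp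
    finally show ?thesis using a0[of i] by simp
  qed
  have nC: "vnorm (F i) * vnorm (C i) = a i" if i: "i < N" for i
    unfolding Ceq[OF i] vnorm_smult a_def norm_of_real using A by (simp add: power2_eq_square)
  have rhoC: "spectral_radius (err_op1 n N p F C i) = q i * a i" if i: "i < N" for i
    using rho_err[where G=C and F=F and i=i and N=N and p=p, OF Cc[OF i] Fc[OF i] n] q0[OF i] ipC[OF i] unfolding q_def by simp
  have opC: "op_norm K n (err_op1 n N p F C i) = q i * a i" if i: "i < N" for i
  proof -
    have "op_norm K n (err_op1 n N p F C i) \<le> q i * a i"
      using op_err_le[where G=C and F=F and i=i and N=N and p=p, OF K Cc[OF i] Fc[OF i]] q0[OF i] nC[OF i] unfolding q_def by (simp add: mult.assoc)
    moreover have "q i * a i \<le> op_norm K n (err_op1 n N p F C i)"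
      using op_err_ge[where G=C and F=F and i=i and N=N and p=p, OF K Cs[OF i] Fc[OF i]] q0[OF i] ipC[OF i] unfolding q_def by simp
    ultimately show ?thesis by simp
  qed
  define M where "M = Max ((\<lambda>i. q i * a i) ` {..<N})"
  have r1C: "r1 n N p F C = M" unfolding r1_def M_def
    by (intro arg_cong[where f = Max] image_cong refl) (simp add: rhoC)
  have A1C: "A1 K n N p F C = M" unfolding A1_def M_def
    by (intro arg_cong[where f = Max] image_cong refl) (simp add: rhoC opC)
  have dual_sp: "\<And>i. i < N \<Longrightarrow> in_space K n (G i)" if "is_dual K n N F G" for G
    using that unfolding is_dual_def is_frame_def by auto
  have rhoG: "spectral_radius (err_op1 n N p F G i) = q i * cmod (ip (G i) (F i))"
    if "is_dual K n N F G" "i < N" for G i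
    using rho_err[where G=G and F=F and i=i and N=N and p=p, OF in_space_carrier[OF dual_sp[OF that]] Fc[OF that(2)] n] q0[OF that(2)] unfolding q_def by simp
  have r1_le_A1: "r1 n N p F G \<le> A1 K n N p F G" if G: "is_dual K n N F G" for G
    unfolding r1_def A1_def
  proof (rule Max_mono_fun[OF fin ne])
    fix i assume "i \<in> {..<N}"
    hence i: "i < N" by simp
    have "spectral_radius (err_op1 n N p F G i) \<le> op_norm K n (err_op1 n N p F G i)"
      using op_err_ge[where G=G and F=F and i=i and N=N and p=p, OF K dual_sp[OF G i] Fc[OF i]] q0[OF i] rhoG[OF G i] unfolding q_def by simp
    thus "spectral_radius (err_op1 n N p F G i)
          \<le> (op_norm K n (err_op1 n N p F G i) + spectral_radius (err_op1 n N p F G i)) / 2" by simp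
  qed
  show ?thesis
  proof
    assume ps: "is_PSOD1 K n N p F (canonical_dual n N F)"
    hence dC: "is_dual K n N F C" and minr: "\<And>G'. is_dual K n N F G' \<Longrightarrow> r1 n N p F C \<le> r1 n N p F G'"
      unfolding is_PSOD1_def C_def by auto
    have "A1 K n N p F C \<le> A1 K n N p F G'" if G': "is_dual K n N F G'" for G'
      using A1C r1C minr[OF G'] r1_le_A1[OF G'] by simp
    thus "canonical_dual n N F \<in> Delta1 K n N p F"
      unfolding Delta1_def C_def[symmetric] using dC by auto
  next
    assume "canonical_dual n N F \<in> Delta1 K n N p F"
    hence dC: "is_dual K n N F C" and minA: "\<And>G'. is_dual K n N F G' \<Longrightarrow> A1 K n N p F C \<le> A1 K n N p F G'"
      unfolding Delta1_def C_def by auto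
    have "r1 n N p F C \<le> r1 n N p F G" if G: "is_dual K n N F G" for G
    proof (rule ccontr)
      assume "\<not> r1 n N p F C \<le> r1 n N p F G"
      hence lt: "r1 n N p F G < M" using r1C by simp
      define b where "b = (\<lambda>i. cmod (ip (G i) (F i)))"
      have r1G: "r1 n N p F G = Max ((\<lambda>i. q i * b i) ` {..<N})" unfolding r1_def b_def
        by (intro arg_cong[where f = Max] image_cong refl) (simp add: rhoG[OF G])
      have qb: "q i * b i < M" if i: "i < N" for i
      proof -
        have "q i * b i \<le> r1 n N p F G" unfolding r1G using fin i by (intro Max_ge) auto
        thus ?thesis using lt by simp
      qed
      have qa: "q i * a i \<le> M" if i: "i < N" for i
        unfolding M_def using fin i by (intro Max_ge) auto
      have b0: "\<And>i. b i \<ge> 0" unfolding b_def by simp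
      have M0: "M > 0" using qb[of 0] N0 q0[of 0] b0[of 0] by (smt (verit) mult_nonneg_nonneg neq0_conv)
      define Cn where "Cn = (\<lambda>i. (vnorm (F i) * vnorm (G i))^2)"
      define D where "D = (\<lambda>i. 2 * M * (M - q i * b i) / ((q i)^2 * Cn i + 1))"
      have Cn0: "\<And>i. Cn i \<ge> 0" unfolding Cn_def by simp
      have Dpos: "D i > 0" if i: "i < N" for i
        unfolding D_def using M0 qb[OF i] Cn0[of i] by (simp add: add_nonneg_pos)
      define t where "t = min 1 (Min (D ` {..<N}))"
      have tpos: "t > 0" unfolding t_def using fin ne Dpos by (simp add: Min_gr_iff)
      have t1: "t \<le> 1" unfolding t_def by simp
      have tD: "t \<le> D i" if i: "i < N" for i
      proof -
        have "Min (D ` {..<N}) \<le> D i" using fin i by (intro Min_le) auto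
        thus ?thesis unfolding t_def by simp
      qed
      have tC: "t * (q i)^2 * Cn i < 4 * M * (M - q i * b i)" if i: "i < N" for i
      proof -
        have den: "(q i)^2 * Cn i + 1 > 0" using Cn0[of i] by (simp add: add_nonneg_pos)
        have "t * ((q i)^2 * Cn i + 1) \<le> 2 * M * (M - q i * b i)"
          using tD[OF i] den unfolding D_def by (simp add: pos_le_divide_eq)
        moreover have "2 * M * (M - q i * b i) > 0" using M0 qb[OF i] by simp
        ultimately show ?thesis using tpos by (simp add: algebra_simps)
      qed
      define Gt where "Gt = (\<lambda>i. complex_of_real (1 - t) \<cdot>\<^sub>v C i + complex_of_real t \<cdot>\<^sub>v G i)"
      have dGt: "is_dual K n N F Gt" unfolding Gt_def by (rule dual_comb[OF K sp tight A dC G])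
      have trm: "(op_norm K n (err_op1 n N p F Gt i) + spectral_radius (err_op1 n N p F Gt i)) / 2 < M"
        if i: "i < N" for i
      proof -
        have Gc: "G i \<in> carrier_vec n" using in_space_carrier[OF dual_sp[OF G i]] .
        have Gtc: "Gt i \<in> carrier_vec n" using in_space_carrier[OF dual_sp[OF dGt i]] .
        have yeq: "Gt i = complex_of_real (1 - t) \<cdot>\<^sub>v (complex_of_real (1 / A) \<cdot>\<^sub>v F i) + complex_of_real t \<cdot>\<^sub>v G i"
          unfolding Gt_def Ceq[OF i] ..
        note gb = gt_bounds[OF Fc[OF i] Gc A less_imp_le[OF tpos] t1 yeq]
        have op: "op_norm K n (err_op1 n N p F Gt i) \<le> q i * (vnorm (F i) * vnorm (Gt i))"
          using op_err_le[where G=Gt and F=F and i=i and N=N and p=p, OF K Gtc Fc[OF i]] q0[OF i] unfolding q_def by (simp add: mult.assoc)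
        have rh: "spectral_radius (err_op1 n N p F Gt i) = q i * cmod (ip (Gt i) (F i))"
          by (rule rhoG[OF dGt i])
        have "q i * (vnorm (F i) * vnorm (Gt i) + cmod (ip (Gt i) (F i))) / 2 < M"
        proof (rule key_real[OF q0[OF i] M0 qa[OF i] qb[OF i] a0 b0 tpos t1])
          show "vnorm (F i) * vnorm (Gt i) \<ge> 0" by (simp add: vnorm_nonneg)
          show "cmod (ip (Gt i) (F i)) \<le> (1 - t) * a i + t * b i" using gb(1) unfolding a_def b_def .
          show "(vnorm (F i) * vnorm (Gt i))^2 \<le> ((1 - t) * a i + t * b i)^2 + t^2 * Cn i"
            using gb(2) unfolding a_def b_def Cn_def .
          show "t * (q i)^2 * Cn i < 4 * M * (M - q i * b i)" by (rule tC[OF i])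
        qed
        thus ?thesis using op rh by (simp add: distrib_left)
      qed
      have "A1 K n N p F Gt < M" unfolding A1_def using fin ne trm by (simp add: Max_less_iff)
      moreover have "A1 K n N p F C \<le> A1 K n N p F Gt" by (rule minA[OF dGt])
      ultimately show False using A1C by simp
    qed
    thus "is_PSOD1 K n N p F (canonical_dual n N F)"
      unfolding is_PSOD1_def C_def[symmetric] using dC by auto
  qed
qed

end
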